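(* Let $A$ be a dga with a positive weight decomposition. If $H^*(A)$ is finite dimensional, then there are a rational number $\alpha>0$ and an integer $k\ge0$ such that $A$ is $(\alpha,k)$-segmented.
   Context: A weight decomposition of a non-negatively graded dga $A$ is a splitting $A^n=\bigoplus_pA^n_p$ with $dA^n_p\subseteq A^{n+1}_p$ and $A^n_pA^m_q\subseteq A^{n+m}_{p+q}$; it is positive if $A^0$ has weight $0$ and $A^i$ has positive weights for $i\ne0$. $A$ is $(\alpha,k)$-segmented if $H^n(A)_p:=H^n(A_p)$ is non-trivial only when $\alpha n\le p\le\alpha(n+k)$. *)

theory Defs
  imports Complex_Main
begin

text \<open>A dga over a field 'k is modelled by its total space, a type 'a with an
associative unital multiplication (ring_1), a 'k-vector space structure scale
for which the multiplication is bilinear, and a differential d.  The bigrading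
(cohomological degree n, weight p) is a family of subspaces V (n,p) = A^n_p whose
direct sum is the whole algebra; A^n is the direct sum of the V (n,p) over p.\<close>

definition direct_sum_decomp ::
  "('k::field \<Rightarrow> 'a::ab_group_add \<Rightarrow> 'a) \<Rightarrow> ('i \<Rightarrow> 'a set) \<Rightarrow> bool" where
  "direct_sum_decomp scale V \<longleftrightarrow>
     (\<forall>i. module.subspace scale (V i)) \<and>
     (\<forall>x. \<exists>S f. finite S \<and> (\<forall>i\<in>S. f i \<in> V i) \<and> x = sum f S) \<and>
     (\<forall>S f. finite S \<longrightarrow> (\<forall>i\<in>S. f i \<in> V i) \<longrightarrow> sum f S = 0 \<longrightarrow> (\<forall>i\<in>S. f i = 0))"

definition weighted_dga ::
  "('k::field \<Rightarrow> 'a::ring_1 \<Rightarrow> 'a) \<Rightarrow> ('a \<Rightarrow> 'a) \<Rightarrow> (nat \<times> int \<Rightarrow> 'a set) \<Rightarrow> bool" where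
  "weighted_dga scale d V \<longleftrightarrow>
     vector_space scale \<and>
     (\<forall>c x y. scale c (x * y) = scale c x * y \<and> scale c (x * y) = x * scale c y) \<and>
     direct_sum_decomp scale V \<and>
     (\<exists>p. 1 \<in> V (0, p)) \<and>
     (\<forall>n m p q x y. x \<in> V (n, p) \<longrightarrow> y \<in> V (m, q) \<longrightarrow> x * y \<in> V (n + m, p + q)) \<and>
     Vector_Spaces.linear scale scale d \<and>
     (\<forall>x. d (d x) = 0) \<and>
     (\<forall>n p x. x \<in> V (n, p) \<longrightarrow> d x \<in> V (Suc n, p)) \<and>
     (\<forall>n p x y. x \<in> V (n, p) \<longrightarrow> d (x * y) = d x * y + (-1) ^ n * x * d y)"

definition positive_weights :: "(nat \<times> int \<Rightarrow> 'a::zero set) \<Rightarrow> bool" where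
  "positive_weights V \<longleftrightarrow>
     (\<forall>p. p \<noteq> 0 \<longrightarrow> V (0, p) = {0}) \<and>
     (\<forall>n p. n \<noteq> 0 \<longrightarrow> p \<le> 0 \<longrightarrow> V (n, p) = {0})"

text \<open>H^n(A)_p = H^n(A_p) is non-trivial: some cocycle of degree n and weight p is
not a coboundary d(A^(n-1)_p) (where A^(-1) = 0).\<close>

definition coh_nontrivial ::
  "('a::ab_group_add \<Rightarrow> 'a) \<Rightarrow> (nat \<times> int \<Rightarrow> 'a set) \<Rightarrow> nat \<Rightarrow> int \<Rightarrow> bool" where
  "coh_nontrivial d V n p \<longleftrightarrow>
     (\<exists>z\<in>V (n, p). d z = 0 \<and> z \<notin> (if n = 0 then {0} else d ` V (n - 1, p)))"

text \<open>H^*(A) = ker d / im d is finite dimensional: it is spanned by the classes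
of finitely many cocycles.\<close>

definition finite_dim_cohomology ::
  "('k::field \<Rightarrow> 'a::ab_group_add \<Rightarrow> 'a) \<Rightarrow> ('a \<Rightarrow> 'a) \<Rightarrow> bool" where
  "finite_dim_cohomology scale d \<longleftrightarrow>
     (\<exists>F. finite F \<and> (\<forall>z\<in>F. d z = 0) \<and>
        (\<forall>z. d z = 0 \<longrightarrow> (\<exists>u\<in>module.span scale F. \<exists>b. z = u + d b)))"

definition segmented ::
  "('a::ab_group_add \<Rightarrow> 'a) \<Rightarrow> (nat \<times> int \<Rightarrow> 'a set) \<Rightarrow> rat \<Rightarrow> int \<Rightarrow> bool" where
  "segmented d V \<alpha> k \<longleftrightarrow>
     (\<forall>n p. coh_nontrivial d V n p \<longrightarrow>
        \<alpha> * of_nat n \<le> of_int p \<and> of_int p \<le> \<alpha> * (of_nat n + of_int k))"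

end

theory Submission
  imports Defs
begin

definition proj :: "('i \<Rightarrow> 'a::ab_group_add set) \<Rightarrow> 'i \<Rightarrow> 'a \<Rightarrow> 'a" where
  "proj V i x = (THE v. \<exists>S f. finite S \<and> (\<forall>j\<in>S. f j \<in> V j) \<and> x = sum f S \<and>
      v = (if i \<in> S then f i else 0))"

lemma sum_restr:
  assumes "finite T" "S \<subseteq> T"
  shows "(\<Sum>j\<in>T. if j\<in>S then f j else 0) = sum f S"
proof -
  have "sum f (T \<inter> S) = (\<Sum>j\<in>T. if j\<in>S then f j else 0)"
    by (rule sum.inter_restrict[OF assms(1)])
  moreover have "T \<inter> S = S" using assms(2) by blast
  ultimately show ?thesis by simp
qed

lemma ds_sub:
  assumes "direct_sum_decomp scale V" shows "module.subspace scale (V j)"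
  using assms by (simp add: direct_sum_decomp_def)

lemma ds_zero:
  assumes M: "module scale" and D: "direct_sum_decomp scale V" shows "0 \<in> V j"
  using module.subspace_0[OF M ds_sub[OF D]] .

lemma ds_exists:
  assumes "direct_sum_decomp scale V"
  shows "\<exists>S f. finite S \<and> (\<forall>i\<in>S. f i \<in> V i) \<and> x = sum f S"
  using assms by (simp add: direct_sum_decomp_def)

lemma ds_unique:
  assumes M: "module scale" and D: "direct_sum_decomp scale V"
    and S: "finite S" "\<forall>j\<in>S. f j \<in> V j" "x = sum f S"
    and S': "finite S'" "\<forall>j\<in>S'. g j \<in> V j" "x = sum g S'"
  shows "(if i\<in>S then f i else 0) = (if i\<in>S' then g i else 0)"
proof -
  let ?h = "\<lambda>j. (if j\<in>S then f j else 0) - (if j\<in>S' then g j else 0)"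
  have hV: "\<forall>j\<in>S\<union>S'. ?h j \<in> V j"
  proof
    fix j assume "j \<in> S\<union>S'"
    have a: "(if j\<in>S then f j else 0) \<in> V j" using S ds_zero[OF M D] by auto
    have b: "(if j\<in>S' then g j else 0) \<in> V j" using S' ds_zero[OF M D] by auto
    show "?h j \<in> V j" using module.subspace_diff[OF M ds_sub[OF D] a b] .
  qed
  have fin: "finite (S\<union>S')" using S S' by simp
  have e1: "(\<Sum>j\<in>S\<union>S'. (if j\<in>S then f j else 0)) = sum f S"
    using fin by (simp add: sum_restr)
  have e2: "(\<Sum>j\<in>S\<union>S'. (if j\<in>S' then g j else 0)) = sum g S'"
    using fin by (simp add: sum_restr)
  have hs: "sum ?h (S\<union>S') = 0"
  proof -
    have "sum ?h (S\<union>S') = (\<Sum>j\<in>S\<union>S'. (if j\<in>S then f j else 0)) -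
        (\<Sum>j\<in>S\<union>S'. (if j\<in>S' then g j else 0))"
      by (rule sum_subtractf)
    also have "\<dots> = sum f S - sum g S'" by (simp only: e1 e2)
    also have "\<dots> = 0" using S(3) S'(3) by simp
    finally show ?thesis .
  qed
  have ax: "\<forall>S f. finite S \<longrightarrow> (\<forall>i\<in>S. f i \<in> V i) \<longrightarrow> sum f S = 0 \<longrightarrow> (\<forall>i\<in>S. f i = 0)"
    using D unfolding direct_sum_decomp_def by (elim conjE)
  have z: "?h i = 0" if "i \<in> S\<union>S'"
    using ax[rule_format, of "S\<union>S'" ?h i] fin hV hs that by blast
  show ?thesis
  proof (cases "i \<in> S\<union>S'")
    case True
    then show ?thesis using z by simp
  next
    case False
    then show ?thesis by simp
  qed
qed

lemma proj_eq:
  assumes M: "module scale" and D: "direct_sum_decomp scale V"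
    and S: "finite S" "\<forall>j\<in>S. f j \<in> V j" "x = sum f S"
  shows "proj V i x = (if i\<in>S then f i else 0)"
  unfolding proj_def
proof (rule the_equality)
  show "\<exists>S' g. finite S' \<and> (\<forall>j\<in>S'. g j \<in> V j) \<and> x = sum g S' \<and>
      (if i \<in> S then f i else 0) = (if i \<in> S' then g i else 0)"
    using S by blast
next
  fix v assume "\<exists>S' g. finite S' \<and> (\<forall>j\<in>S'. g j \<in> V j) \<and> x = sum g S' \<and>
      v = (if i \<in> S' then g i else 0)"
  then obtain S' g where S': "finite S'" "\<forall>j\<in>S'. g j \<in> V j" "x = sum g S'"
      and v: "v = (if i \<in> S' then g i else 0)" by blast
  have "(if i\<in>S then f i else 0) = (if i\<in>S' then g i else 0)"
    by (rule ds_unique[OF M D S S'])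
  then show "v = (if i \<in> S then f i else 0)" using v by simp
qed

lemma proj_in:
  assumes M: "module scale" and D: "direct_sum_decomp scale V"
  shows "proj V i x \<in> V i"
proof -
  obtain S f where S: "finite S" "\<forall>j\<in>S. f j \<in> V j" "x = sum f S"
    using ds_exists[OF D] by blast
  have e: "proj V i x = (if i\<in>S then f i else 0)" by (rule proj_eq[OF M D S])
  show ?thesis
  proof (cases "i \<in> S")
    case True
    then show ?thesis using e S(2) by simp
  next
    case False
    then show ?thesis using e ds_zero[OF M D] by simp
  qed
qed

lemma proj_same:
  assumes M: "module scale" and D: "direct_sum_decomp scale V" and x: "x \<in> V i"
  shows "proj V i x = x"
proof -
  have "proj V i x = (if i\<in>{i} then (\<lambda>_. x) i else 0)"
    by (rule proj_eq[OF M D]) (use x in auto)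
  then show ?thesis by simp
qed

lemma proj_other:
  assumes M: "module scale" and D: "direct_sum_decomp scale V" and x: "x \<in> V j" "j \<noteq> i"
  shows "proj V i x = 0"
proof -
  have "proj V i x = (if i\<in>{j} then (\<lambda>_. x) i else 0)"
    by (rule proj_eq[OF M D]) (use x in auto)
  then show ?thesis using x by simp
qed

lemma if_un_aux: "(if i \<in> S \<union> T then (if i\<in>S then a else 0) + (if i\<in>T then b else 0) else 0) = (if i\<in>S then a else 0) + (if i\<in>T then (b::'a::monoid_add) else 0)"
  by (cases "i \<in> S"; cases "i \<in> T") simp_all

lemma proj_add:
  assumes M: "module scale" and D: "direct_sum_decomp scale V"
  shows "proj V i (x + y) = proj V i x + proj V i y"
proof -
  obtain S f where S: "finite S" "\<forall>j\<in>S. f j \<in> V j" "x = sum f S"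
    using ds_exists[OF D] by blast
  obtain S' g where S': "finite S'" "\<forall>j\<in>S'. g j \<in> V j" "y = sum g S'"
    using ds_exists[OF D] by blast
  let ?f = "\<lambda>j. (if j\<in>S then f j else 0)"
  let ?g = "\<lambda>j. (if j\<in>S' then g j else 0)"
  have fin: "finite (S\<union>S')" using S S' by simp
  have e1: "sum ?f (S\<union>S') = x"
    by (simp only: sum_restr[OF fin Un_upper1] S(3))
  have e2: "sum ?g (S\<union>S') = y"
    by (simp only: sum_restr[OF fin Un_upper2] S'(3))
  have hV: "\<forall>j\<in>S\<union>S'. ?f j + ?g j \<in> V j"
  proof
    fix j assume "j \<in> S\<union>S'"
    have a: "?f j \<in> V j" using S(2) ds_zero[OF M D] by auto
    have b: "?g j \<in> V j" using S'(2) ds_zero[OF M D] by auto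
    show "?f j + ?g j \<in> V j" using module.subspace_add[OF M ds_sub[OF D] a b] .
  qed
  have "x + y = (\<Sum>j\<in>S\<union>S'. ?f j + ?g j)" by (simp only: sum.distrib e1 e2)
  from proj_eq[OF M D fin hV this, of i] have p1:
    "proj V i (x + y) = (if i \<in> S\<union>S' then ?f i + ?g i else 0)" .
  have p2: "proj V i x = ?f i" using proj_eq[OF M D S, of i] .
  have p3: "proj V i y = ?g i" using proj_eq[OF M D S', of i] .
  show ?thesis unfolding p1 p2 p3 by (rule if_un_aux)
qed

lemma proj_scale:
  assumes M: "module scale" and D: "direct_sum_decomp scale V"
  shows "proj V i (scale c x) = scale c (proj V i x)"
proof -
  obtain S f where S: "finite S" "\<forall>j\<in>S. f j \<in> V j" "x = sum f S"
    using ds_exists[OF D] by blast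
  have hV: "\<forall>j\<in>S. scale c (f j) \<in> V j"
    using S module.subspace_scale[OF M ds_sub[OF D]] by blast
  have "scale c x = (\<Sum>j\<in>S. scale c (f j))"
    using S module.scale_sum_right[OF M] by metis
  from proj_eq[OF M D S(1) hV this, of i] proj_eq[OF M D S, of i]
  show ?thesis using module.scale_zero_right[OF M] by auto
qed

lemma proj_zero:
  assumes M: "module scale" and D: "direct_sum_decomp scale V"
  shows "proj V i 0 = 0"
  using proj_same[OF M D ds_zero[OF M D]] .

lemma proj_finite:
  assumes M: "module scale" and D: "direct_sum_decomp scale V"
  shows "finite {i. proj V i x \<noteq> 0}"
proof -
  obtain S f where S: "finite S" "\<forall>j\<in>S. f j \<in> V j" "x = sum f S"
    using ds_exists[OF D] by blast
  have "{i. proj V i x \<noteq> 0} \<subseteq> S" using proj_eq[OF M D S] by auto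
  then show ?thesis using S(1) finite_subset by blast
qed

lemma proj_d:
  fixes V :: "nat \<times> int \<Rightarrow> 'a::ab_group_add set"
  assumes M: "module scale" and D: "direct_sum_decomp scale V"
    and L: "module_hom scale scale d"
    and dV: "\<forall>n p x. x \<in> V (n, p) \<longrightarrow> d x \<in> V (Suc n, p)"
  shows "proj V (n, p) (d b) = (if n = 0 then 0 else d (proj V (n - 1, p) b))"
proof -
  obtain S g where S: "finite S" "\<forall>j\<in>S. g j \<in> V j" "b = sum g S"
    using ds_exists[OF D] by blast
  define sh :: "nat \<times> int \<Rightarrow> nat \<times> int" where "sh = (\<lambda>(m, q). (Suc m, q))"
  define h where "h = (\<lambda>j::nat\<times>int. d (g (fst j - 1, snd j)))"
  have inj: "inj_on sh S" unfolding sh_def inj_on_def by auto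
  have "d b = (\<Sum>j\<in>S. d (g j))" unfolding S(3) by (rule module_hom.sum[OF L])
  also have "\<dots> = sum (h \<circ> sh) S"
    by (rule sum.cong) (auto simp: h_def sh_def)
  also have "\<dots> = sum h (sh ` S)" by (rule sum.reindex[OF inj, symmetric])
  finally have db: "d b = sum h (sh ` S)" .
  have hV: "\<forall>j\<in>sh ` S. h j \<in> V j"
  proof
    fix j assume "j \<in> sh ` S"
    then obtain m q where mq: "(m, q) \<in> S" "j = (Suc m, q)" unfolding sh_def by auto
    have "g (m, q) \<in> V (m, q)" using S(2) mq(1) by blast
    then have "d (g (m, q)) \<in> V (Suc m, q)" using dV by blast
    moreover have "h j = d (g (m, q))" using mq(2) by (simp add: h_def)
    ultimately show "h j \<in> V j" using mq(2) by simp
  qed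
  have P: "proj V (n, p) (d b) = (if (n, p) \<in> sh ` S then h (n, p) else 0)"
    by (rule proj_eq[OF M D _ hV db]) (use S(1) in simp)
  show ?thesis
  proof (cases "n = 0")
    case True
    then have "(n, p) \<notin> sh ` S" unfolding sh_def by auto
    then show ?thesis using P True by simp
  next
    case False
    have iff: "(n, p) \<in> sh ` S \<longleftrightarrow> (n - 1, p) \<in> S"
    proof
      assume "(n, p) \<in> sh ` S"
      then obtain m q where mq: "(m, q) \<in> S" "(n, p) = (Suc m, q)" unfolding sh_def by auto
      then show "(n - 1, p) \<in> S" by simp
    next
      assume a: "(n - 1, p) \<in> S"
      have "(n, p) = sh (n - 1, p)" using False unfolding sh_def by simp
      then show "(n, p) \<in> sh ` S" using a by blast
    qed
    have pb: "proj V (n - 1, p) b = (if (n - 1, p) \<in> S then g (n - 1, p) else 0)"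
      using proj_eq[OF M D S] .
    show ?thesis
    proof (cases "(n - 1, p) \<in> S")
      case True
      then show ?thesis using P iff False pb by (simp add: h_def)
    next
      case F2: False
      then show ?thesis using P iff False pb module_hom.zero[OF L] by simp
    qed
  qed
qed

theorem proposition3p13:
  fixes scale :: "'k::field_char_0 \<Rightarrow> 'a::ring_1 \<Rightarrow> 'a"
    and d :: "'a \<Rightarrow> 'a"
    and V :: "nat \<times> int \<Rightarrow> 'a set"
  assumes "weighted_dga scale d V"
    and "positive_weights V"
    and "finite_dim_cohomology scale d"
  shows "\<exists>\<alpha>::rat. \<alpha> > 0 \<and> (\<exists>k::int. k \<ge> 0 \<and> segmented d V \<alpha> k)"
proof -
  have VS: "vector_space scale" and D: "direct_sum_decomp scale V"
    and Lin: "Vector_Spaces.linear scale scale d"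
    and dV: "\<forall>n p x. x \<in> V (n, p) \<longrightarrow> d x \<in> V (Suc n, p)"
    using assms(1) unfolding weighted_dga_def by auto
  have M: "module scale" using VS module_iff_vector_space by blast
  have L: "module_hom scale scale d" using Lin module_hom_iff_linear by blast
  have d0: "d 0 = 0" using module_hom.zero[OF L] .
  obtain F where F: "finite F" "\<forall>z\<in>F. d z = 0"
    "\<forall>z. d z = 0 \<longrightarrow> (\<exists>u\<in>module.span scale F. \<exists>b. z = u + d b)"
    using assms(3) unfolding finite_dim_cohomology_def by blast
  define B where "B = (\<Union>z\<in>F. {i. proj V i z \<noteq> 0})"
  have finB: "finite B" unfolding B_def using F(1) proj_finite[OF M D] by blast
  have key: "(n, p) \<in> B" if nt: "coh_nontrivial d V n p" for n p
  proof (rule ccontr)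
    assume nB: "(n, p) \<notin> B"
    obtain z where z: "z \<in> V (n, p)" "d z = 0"
      "z \<notin> (if n = 0 then {0} else d ` V (n - 1, p))"
      using nt unfolding coh_nontrivial_def by blast
    obtain u b where u: "u \<in> module.span scale F" "z = u + d b" using F(3) z(2) by blast
    have sub: "module.subspace scale {u. proj V (n, p) u = 0}"
      using module.subspaceI[OF M, of "{u. proj V (n, p) u = 0}"]
        proj_zero[OF M D] proj_add[OF M D] proj_scale[OF M D] module.scale_zero_right[OF M] by simp
    have pu: "proj V (n, p) u = 0"
      using module.span_induct[OF M u(1), of "\<lambda>u. proj V (n, p) u = 0"] sub nB
      unfolding B_def by auto
    have "z = proj V (n, p) z" using proj_same[OF M D z(1)] by simp
    also have "\<dots> = proj V (n, p) (d b)" using u(2) pu proj_add[OF M D] by simp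
    also have "\<dots> = (if n = 0 then 0 else d (proj V (n - 1, p) b))"
      using proj_d[OF M D L dV] .
    finally have "z = (if n = 0 then 0 else d (proj V (n - 1, p) b))" .
    then show False using z(3) proj_in[OF M D, of "(n - 1, p)" b] by (auto split: if_splits)
  qed
  have pos0: "p = 0" if "coh_nontrivial d V 0 p" for p
  proof (rule ccontr)
    assume "p \<noteq> 0"
    then have "V (0, p) = {0}" using assms(2) unfolding positive_weights_def by blast
    then show False using that unfolding coh_nontrivial_def by auto
  qed
  have posn: "p > 0" if "coh_nontrivial d V n p" "n \<noteq> 0" for n p
  proof (rule ccontr)
    assume "\<not> p > 0"
    then have "V (n, p) = {0}" using assms(2) that(2) unfolding positive_weights_def by auto
    moreover have "0 \<in> V (n - 1, p)" using ds_zero[OF M D] .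
    ultimately show False using that d0 unfolding coh_nontrivial_def by (auto simp: image_iff)
  qed
  define N where "N = Suc (Max (insert 0 (fst ` B)))"
  define P where "P = Max (insert 0 (snd ` B))"
  have nN: "n \<le> N" if "(n, p) \<in> B" for n p
  proof -
    have "n \<le> Max (insert 0 (fst ` B))" using finB that
      by (intro Max_ge) (auto simp: image_iff intro!: bexI[of _ "(n,p)"])
    then show ?thesis unfolding N_def by simp
  qed
  have pP: "p \<le> P" if "(n, p) \<in> B" for n p
    unfolding P_def using finB that
    by (intro Max_ge) (auto simp: image_iff intro!: bexI[of _ "(n,p)"])
  have P0: "0 \<le> P" unfolding P_def using finB by (intro Max_ge) auto
  have N1: "N \<ge> 1" unfolding N_def by simp
  define \<alpha> :: rat where "\<alpha> = 1 / of_nat N"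
  define k :: int where "k = int N * P"
  have apos: "\<alpha> > 0" unfolding \<alpha>_def using N1 by simp
  have k0: "k \<ge> 0" unfolding k_def using P0 by simp
  have "segmented d V \<alpha> k"
    unfolding segmented_def
  proof (intro allI impI)
    fix n p assume nt: "coh_nontrivial d V n p"
    have inB: "(n, p) \<in> B" using key[OF nt] .
    have Nr: "(of_nat N :: rat) \<ge> 1" using N1 by simp
    have e: "\<alpha> * (of_nat n + of_int k) = of_nat n / of_nat N + of_int P"
      unfolding \<alpha>_def k_def using Nr by (simp add: field_simps)
    have nr: "(of_nat n :: rat) \<le> of_nat N" using nN[OF inB] by simp
    have q1: "of_nat n / of_nat N \<le> (1::rat)" using nr Nr by simp
    have q0: "0 \<le> of_nat n / (of_nat N :: rat)" by simp
    have pr: "(of_int p :: rat) \<le> of_int P" using pP[OF inB] by simp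
    show "\<alpha> * of_nat n \<le> of_int p \<and> of_int p \<le> \<alpha> * (of_nat n + of_int k)"
    proof (cases "n = 0")
      case True
      then have "p = 0" using pos0 nt by simp
      then show ?thesis using True e P0 by simp
    next
      case False
      then have "p \<ge> 1" using posn[OF nt] by simp
      then have "(of_int p :: rat) \<ge> 1" by simp
      moreover have "\<alpha> * of_nat n = of_nat n / of_nat N" unfolding \<alpha>_def by simp
      ultimately show ?thesis using e q1 q0 pr by linarith
    qed
  qed
  then show ?thesis using apos k0 by blast
qed

end
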